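(* Assume $\mathcal{Z}$ is norm-Euclidean. Then there is a constant $R_2>0$ such that for every digit string $s$ with $n=|s|$ and all $x,y\in C_s$, $d(x,y)\le R_2\,d(T^nx,T^ny)$.
   Context: $X=\mathbb{R}^d$ (including $\mathbb{C},\mathbb{H},\mathbb{O}$ as $\mathbb{R}^2,\mathbb{R}^4,\mathbb{R}^8$) with Euclidean norm and distance $d$. $\iota:X\setminus\{0\}\to X\setminus\{0\}$ satisfies $|\iota x|=1/|x|$, $d(\iota x,\iota y)=d(x,y)/(|x||y|)$ and $\iota\circ\iota=\mathrm{id}$; $\iota(0)=0$. $\mathcal{Z}$ is a discrete additive subgroup with compact quotient, $K=\{x:d(x,0)\le d(x,z)\ \forall z\in\mathcal{Z}\}$ its Dirichlet region with a boundary choice so each $x$ has a unique $[x]\in\mathcal{Z}$ with $x-[x]\in K$; norm-Euclidean means $\sup_{x\in K}|x|<1$. $Tx=\iota x-[\iota x]$ ($x\ne0$), $T0=0$. Cylinders: $C_\emptyset=K$, $C_{as}=K\cap\iota(C_s+a)$ for $a\in\mathcal{Z}$. *)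

theory Defs
  imports "HOL-Analysis.Analysis"
begin

text \<open>Dirichlet region of the lattice Z (closed version, before boundary choice).\<close>
definition dirichlet :: "'a::euclidean_space set \<Rightarrow> 'a set" where
  "dirichlet Z = {x. \<forall>z\<in>Z. dist x 0 \<le> dist x z}"

text \<open>Nearest lattice point [x] with respect to the chosen fundamental domain K.\<close>
definition brk :: "'a::euclidean_space set \<Rightarrow> 'a set \<Rightarrow> 'a \<Rightarrow> 'a" where
  "brk Z K x = (THE z. z \<in> Z \<and> x - z \<in> K)"

definition Tmap :: "('a::euclidean_space \<Rightarrow> 'a) \<Rightarrow> 'a set \<Rightarrow> 'a set \<Rightarrow> 'a \<Rightarrow> 'a" where
  "Tmap iota Z K x = (if x = 0 then 0 else iota x - brk Z K (iota x))"

fun cyl :: "('a::euclidean_space \<Rightarrow> 'a) \<Rightarrow> 'a set \<Rightarrow> 'a list \<Rightarrow> 'a set" where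
  "cyl iota K [] = K"
| "cyl iota K (a # s) = K \<inter> iota ` ((\<lambda>y. y + a) ` cyl iota K s)"

end

theory Submission
  imports Defs
begin

theorem lemma4p4:
  fixes iota :: "'a::euclidean_space \<Rightarrow> 'a" and Z K :: "'a set"
  assumes iota_norm: "\<And>x. x \<noteq> 0 \<Longrightarrow> norm (iota x) = 1 / norm x"
    and iota_dist: "\<And>x y. x \<noteq> 0 \<Longrightarrow> y \<noteq> 0 \<Longrightarrow>
                      dist (iota x) (iota y) = dist x y / (norm x * norm y)"
    and iota_inv: "\<And>x. x \<noteq> 0 \<Longrightarrow> iota (iota x) = x"
    and iota_0: "iota 0 = 0"
    and Z_0: "0 \<in> Z"
    and Z_add: "\<And>a b. a \<in> Z \<Longrightarrow> b \<in> Z \<Longrightarrow> a + b \<in> Z"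
    and Z_uminus: "\<And>a. a \<in> Z \<Longrightarrow> - a \<in> Z"
    and Z_discrete: "discrete Z"
    and Z_cocompact: "\<exists>C. compact C \<and> (\<forall>x. \<exists>z\<in>Z. x - z \<in> C)"
    and K_sub: "K \<subseteq> dirichlet Z"
    and K_fund: "\<And>x. \<exists>!z. z \<in> Z \<and> x - z \<in> K"
    and norm_euclidean: "(SUP x\<in>K. norm x) < 1"
  shows "\<exists>R2>0. \<forall>s. set s \<subseteq> Z \<longrightarrow>
           (\<forall>x\<in>cyl iota K s. \<forall>y\<in>cyl iota K s.
              dist x y \<le> R2 * dist ((Tmap iota Z K ^^ length s) x) ((Tmap iota Z K ^^ length s) y))"
proof -
  define T where "T = Tmap iota Z K"
  have KZ: "z = 0" if "z \<in> Z" "z \<in> K" for z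
  proof -
    have "dist z 0 \<le> dist z z" using that K_sub unfolding dirichlet_def by blast
    then show ?thesis by simp
  qed
  obtain C where C: "compact C" "\<forall>x. \<exists>z\<in>Z. x - z \<in> C" using Z_cocompact by blast
  obtain B where B: "\<And>c. c \<in> C \<Longrightarrow> norm c \<le> B"
    using compact_imp_bounded[OF C(1)] bounded_iff by blast
  have bdd: "bdd_above (norm ` K)"
  proof (rule bdd_aboveI2)
    fix x assume "x \<in> K"
    obtain z where z: "z \<in> Z" "x - z \<in> C" using C(2) by blast
    have "dist x 0 \<le> dist x z" using \<open>x \<in> K\<close> z K_sub unfolding dirichlet_def by blast
    then show "norm x \<le> B" using B[OF z(2)] by (simp add: dist_norm)
  qed
  have nK: "norm x < 1" if "x \<in> K" for x
    using cSUP_upper[OF that bdd] norm_euclidean by linarith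
  have cylK: "cyl iota K s \<subseteq> K" for s by (cases s) auto
  have brk: "brk Z K (u + a) = a" if "u \<in> K" "a \<in> Z" for u a
    unfolding brk_def
  proof (rule the_equality)
    show "a \<in> Z \<and> u + a - a \<in> K" using that by simp
    fix z assume "z \<in> Z \<and> u + a - z \<in> K"
    then show "z = a" using K_fund[of "u+a"] that by auto
  qed
  have Tu: "T (iota (u + a)) = u" if "u \<in> K" "a \<in> Z" for u a
  proof (cases "u + a = 0")
    case True
    then have "u = - a" by (simp add: add_eq_0_iff)
    then have "u \<in> Z" using Z_uminus that by simp
    then have "u = 0" using KZ that by blast
    then show ?thesis using True iota_0 by (simp add: T_def Tmap_def)
  next
    case False
    then have "iota (u + a) \<noteq> 0" using iota_norm[OF False] by auto
    then show ?thesis using iota_inv[OF False] brk[OF that] by (simp add: T_def Tmap_def)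
  qed
  have half: "dist (iota (u + a)) (iota (v + a)) \<le> dist u v"
    if "u \<in> K" "v \<in> K" "a \<in> Z" "iota (u + a) \<in> K" "iota (v + a) \<in> K" "u + a = 0" for u v a
  proof -
    have "u = - a" using that(6) by (simp add: add_eq_0_iff)
    then have "u \<in> Z" using Z_uminus that by simp
    then have u0: "u = 0" using KZ that by blast
    then have a0: "a = 0" using that(6) by simp
    show ?thesis
    proof (cases "v = 0")
      case True then show ?thesis using u0 a0 iota_0 by simp
    next
      case False
      have n1: "norm (iota v) < 1" using nK that(5) a0 by simp
      have "norm (iota v) = 1 / norm v" using iota_norm[OF False] .
      then have "norm v > 1" using n1 False by (simp add: divide_less_eq)
      then show ?thesis using u0 a0 iota_0 n1 by (simp add: dist_norm)
    qed
  qed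
  have dstep: "dist (iota (u + a)) (iota (v + a)) \<le> dist u v"
    if "u \<in> K" "v \<in> K" "a \<in> Z" "iota (u + a) \<in> K" "iota (v + a) \<in> K" for u v a
  proof (cases "u + a = 0")
    case True then show ?thesis using half that by blast
  next
    case F1: False
    show ?thesis
    proof (cases "v + a = 0")
      case True then show ?thesis using half[of v u a] that by (simp add: dist_commute)
    next
      case False
      have g1: "norm (u + a) \<ge> 1"
      proof -
        have "1 / norm (u + a) < 1" using nK[OF that(4)] iota_norm[OF F1] by simp
        then show ?thesis using F1 by (simp add: divide_less_eq)
      qed
      have g2: "norm (v + a) \<ge> 1"
      proof -
        have "1 / norm (v + a) < 1" using nK[OF that(5)] iota_norm[OF False] by simp
        then show ?thesis using False by (simp add: divide_less_eq)
      qed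
      have p: "norm (u + a) * norm (v + a) \<ge> 1" using mult_mono[OF g1 g2 norm_ge_zero zero_le_one] by simp
      have "dist (iota (u + a)) (iota (v + a)) = dist (u + a) (v + a) / (norm (u + a) * norm (v + a))"
        using iota_dist[OF F1 False] .
      also have "dist (u + a) (v + a) = dist u v" by (simp add: dist_norm)
      also have "dist u v / (norm (u + a) * norm (v + a)) \<le> dist u v"
        using p by (simp add: divide_le_eq mult_le_cancel_left1 zero_le_dist)
      finally show ?thesis .
    qed
  qed
  have main: "\<forall>x y. x \<in> cyl iota K s \<longrightarrow> y \<in> cyl iota K s \<longrightarrow> set s \<subseteq> Z \<longrightarrow>
      dist x y \<le> dist ((T ^^ length s) x) ((T ^^ length s) y)" for s
  proof (induction s)
    case Nil then show ?case by simp
  next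
    case (Cons a s)
    show ?case
    proof (intro allI impI)
      fix x y assume x: "x \<in> cyl iota K (a # s)" and y: "y \<in> cyl iota K (a # s)"
        and sZ: "set (a # s) \<subseteq> Z"
      obtain u where u: "u \<in> cyl iota K s" "x = iota (u + a)" "x \<in> K" using x by auto
      obtain v where v: "v \<in> cyl iota K s" "y = iota (v + a)" "y \<in> K" using y by auto
      have uK: "u \<in> K" and vK: "v \<in> K" using u v cylK by blast+
      have aZ: "a \<in> Z" using sZ by simp
      have "dist x y \<le> dist u v" using dstep[OF uK vK aZ] u v by simp
      also have "\<dots> \<le> dist ((T ^^ length s) u) ((T ^^ length s) v)"
        using Cons.IH u v sZ by simp
      also have "\<dots> = dist ((T ^^ length (a # s)) x) ((T ^^ length (a # s)) y)"
        using Tu[OF uK aZ] Tu[OF vK aZ] u v by (simp del: funpow.simps add: funpow_Suc_right)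
      finally show "dist x y \<le> dist ((T ^^ length (a # s)) x) ((T ^^ length (a # s)) y)" .
    qed
  qed
  show ?thesis
    by (rule exI[of _ 1]) (use main in \<open>simp add: T_def\<close>)
qed

end
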